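(* Let $(X_1,X_2,Y)$ be jointly distributed finite-valued random variables, and let $I_\cap,UI_1,UI_2,SI$ be nonnegative real numbers satisfying $I(X_1X_2;Y)=I_\cap+SI+UI_1+UI_2$, $I(X_1;Y)=I_\cap+UI_1$, $I(X_2;Y)=I_\cap+UI_2$. Then: (a) if $X_1-X_2-Y$, then $I_\cap=I(X_1;Y)$; (b) if $X_2-X_1-Y$, then $I_\cap=I(X_2;Y)$; (c) if both $X_1-X_2-Y$ and $X_2-X_1-Y$, then $I_\cap=I(X_1;Y)=I(X_2;Y)=I(X_1X_2;Y)$; (d) if $X_1-Y-X_2$, then $I_\cap\geq I(X_1;X_2)$.
   Context: For finite-valued random variables, $A-B-C$ means that $A$ and $C$ are conditionally independent given $B$. $X_1X_2$ denotes the joint variable $(X_1,X_2)$. The numbers $I_\cap$, $UI_1$, $UI_2$, $SI$ represent, respectively, the redundant, unique (of $X_1$), unique (of $X_2$) and synergistic information in a partial information decomposition of $I(X_1X_2;Y)$. *)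

theory Defs
  imports "HOL-Probability.Probability"
begin

definition mutual_info :: "('x \<times> 'y) pmf \<Rightarrow> real" where
  "mutual_info P =
     (\<Sum>z\<in>set_pmf P. pmf P z *
        log 2 (pmf P z / (pmf (map_pmf fst P) (fst z) * pmf (map_pmf snd P) (snd z))))"

text \<open>Markov chain A - B - C: A and C conditionally independent given B,
  for a joint pmf of (A,B,C):  p(a,b,c) p(b) = p(a,b) p(b,c).\<close>

definition markov_chain :: "('a \<times> 'b \<times> 'c) pmf \<Rightarrow> bool" where
  "markov_chain Q \<longleftrightarrow>
     (\<forall>a b c. pmf Q (a, b, c) * pmf (map_pmf (\<lambda>(a, b, c). b) Q) b =
              pmf (map_pmf (\<lambda>(a, b, c). (a, b)) Q) (a, b) *
              pmf (map_pmf (\<lambda>(a, b, c). (b, c)) Q) (b, c))"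

end

theory Submission
  imports Defs
begin

lemma sum_map_pmf:
  assumes "finite (set_pmf P)"
  shows "(\<Sum>w\<in>set_pmf (map_pmf f P). pmf (map_pmf f P) w * g w) = (\<Sum>z\<in>set_pmf P. pmf P z * (g (f z) :: real))"
proof -
  have "(\<integral>w. g w \<partial>measure_pmf (map_pmf f P)) = (\<Sum>w\<in>set_pmf (map_pmf f P). g w * pmf (map_pmf f P) w)"
    using assms by (intro integral_measure_pmf_real) auto
  moreover have "(\<integral>z. g (f z) \<partial>measure_pmf P) = (\<Sum>z\<in>set_pmf P. g (f z) * pmf P z)"
    using assms by (intro integral_measure_pmf_real) auto
  ultimately show ?thesis by (simp add: mult.commute)
qed

lemma mi_expand:
  assumes "finite (set_pmf P)"
  shows "mutual_info (map_pmf (\<lambda>z. (g z, h z)) P) =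
    (\<Sum>z\<in>set_pmf P. pmf P z * (log 2 (pmf (map_pmf (\<lambda>z. (g z, h z)) P) (g z, h z))
        - log 2 (pmf (map_pmf g P) (g z)) - log 2 (pmf (map_pmf h P) (h z))))"
proof -
  have "mutual_info (map_pmf (\<lambda>z. (g z, h z)) P) =
    (\<Sum>z\<in>set_pmf P. pmf P z * log 2 (pmf (map_pmf (\<lambda>z. (g z, h z)) P) (g z, h z) /
        (pmf (map_pmf g P) (g z) * pmf (map_pmf h P) (h z))))"
    unfolding mutual_info_def by (subst sum_map_pmf[OF assms]) (simp add: map_pmf_comp)
  show ?thesis
    unfolding \<open>mutual_info _ = _\<close>
  proof (rule sum.cong[OF refl])
    fix z assume z: "z \<in> set_pmf P"
    have p1: "pmf (map_pmf (\<lambda>z. (g z, h z)) P) (g z, h z) > 0"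
      using z by (intro pmf_positive) auto
    have p2: "pmf (map_pmf g P) (g z) > 0" using z by (intro pmf_positive) auto
    have p3: "pmf (map_pmf h P) (h z) > 0" using z by (intro pmf_positive) auto
    show "pmf P z * log 2 (pmf (map_pmf (\<lambda>z. (g z, h z)) P) (g z, h z) /
        (pmf (map_pmf g P) (g z) * pmf (map_pmf h P) (h z))) = pmf P z * (log 2 (pmf (map_pmf (\<lambda>z. (g z, h z)) P) (g z, h z))
        - log 2 (pmf (map_pmf g P) (g z)) - log 2 (pmf (map_pmf h P) (h z)))"
      using p1 p2 p3 by (simp add: log_divide log_mult)
  qed
qed

theorem lemma4:
  fixes P :: "('a \<times> 'b \<times> 'c) pmf"
    and I_cap UI1 UI2 SI :: real
  assumes fin: "finite (set_pmf P)"
    and nonneg: "I_cap \<ge> 0" "UI1 \<ge> 0" "UI2 \<ge> 0" "SI \<ge> 0"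
    and joint: "mutual_info (map_pmf (\<lambda>(x1, x2, y). ((x1, x2), y)) P) = I_cap + SI + UI1 + UI2"
    and m1: "mutual_info (map_pmf (\<lambda>(x1, x2, y). (x1, y)) P) = I_cap + UI1"
    and m2: "mutual_info (map_pmf (\<lambda>(x1, x2, y). (x2, y)) P) = I_cap + UI2"
  shows
    "(markov_chain (map_pmf (\<lambda>(x1, x2, y). (x1, x2, y)) P) \<longrightarrow>
        I_cap = mutual_info (map_pmf (\<lambda>(x1, x2, y). (x1, y)) P))
   \<and> (markov_chain (map_pmf (\<lambda>(x1, x2, y). (x2, x1, y)) P) \<longrightarrow>
        I_cap = mutual_info (map_pmf (\<lambda>(x1, x2, y). (x2, y)) P))
   \<and> (markov_chain (map_pmf (\<lambda>(x1, x2, y). (x1, x2, y)) P) \<and>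
      markov_chain (map_pmf (\<lambda>(x1, x2, y). (x2, x1, y)) P) \<longrightarrow>
        I_cap = mutual_info (map_pmf (\<lambda>(x1, x2, y). (x1, y)) P) \<and>
        mutual_info (map_pmf (\<lambda>(x1, x2, y). (x1, y)) P) =
          mutual_info (map_pmf (\<lambda>(x1, x2, y). (x2, y)) P) \<and>
        mutual_info (map_pmf (\<lambda>(x1, x2, y). (x2, y)) P) =
          mutual_info (map_pmf (\<lambda>(x1, x2, y). ((x1, x2), y)) P))
   \<and> (markov_chain (map_pmf (\<lambda>(x1, x2, y). (x1, y, x2)) P) \<longrightarrow>
        I_cap \<ge> mutual_info (map_pmf (\<lambda>(x1, x2, y). (x1, x2)) P))"
  proof -
  let ?X = "\<lambda>z::('a \<times> 'b \<times> 'c). (fst z, fst (snd z))"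
  let ?A = "\<lambda>z::('a \<times> 'b \<times> 'c). (fst z, snd (snd z))"
  let ?B = "\<lambda>z::('a \<times> 'b \<times> 'c). (fst (snd z), snd (snd z))"
  define q12 :: "'a \<times> 'b \<times> 'c \<Rightarrow> real" where "q12 z = pmf (map_pmf ?X P) (?X z)" for z
  define q1y :: "'a \<times> 'b \<times> 'c \<Rightarrow> real" where "q1y z = pmf (map_pmf ?A P) (?A z)" for z
  define q2y :: "'a \<times> 'b \<times> 'c \<Rightarrow> real" where "q2y z = pmf (map_pmf ?B P) (?B z)" for z
  define q1 :: "'a \<times> 'b \<times> 'c \<Rightarrow> real" where "q1 z = pmf (map_pmf fst P) (fst z)" for z
  define q2 :: "'a \<times> 'b \<times> 'c \<Rightarrow> real" where "q2 z = pmf (map_pmf (\<lambda>z. fst (snd z)) P) (fst (snd z))" for z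
  define qy :: "'a \<times> 'b \<times> 'c \<Rightarrow> real" where "qy z = pmf (map_pmf (\<lambda>z. snd (snd z)) P) (snd (snd z))" for z
  have pos: "pmf P z > 0" "q12 z > 0" "q1y z > 0" "q2y z > 0" "q1 z > 0" "q2 z > 0" "qy z > 0"
    if "z \<in> set_pmf P" for z
    using that unfolding q12_def q1y_def q2y_def q1_def q2_def qy_def
    by (auto intro!: pmf_positive)
  have MI12Y: "mutual_info (map_pmf (\<lambda>(x1, x2, y). ((x1, x2), y)) P) =
      (\<Sum>z\<in>set_pmf P. pmf P z * (log 2 (pmf P z) - log 2 (q12 z) - log 2 (qy z)))"
  proof -
    have e: "(\<lambda>(x1, x2, y). ((x1, x2), y)) = (\<lambda>z::('a \<times> 'b \<times> 'c). (?X z, snd (snd z)))"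
      by auto
    have j: "pmf (map_pmf (\<lambda>z::('a \<times> 'b \<times> 'c). (?X z, snd (snd z))) P) (?X z, snd (snd z)) = pmf P z" for z
      using pmf_map_inj'[of "\<lambda>z::('a \<times> 'b \<times> 'c). (?X z, snd (snd z))" P z]
      by (auto simp: inj_def prod_eq_iff)
    show ?thesis unfolding e mi_expand[OF fin] j q12_def qy_def ..
  qed
  have MI1Y: "mutual_info (map_pmf (\<lambda>(x1, x2, y). (x1, y)) P) =
      (\<Sum>z\<in>set_pmf P. pmf P z * (log 2 (q1y z) - log 2 (q1 z) - log 2 (qy z)))"
  proof -
    have e: "(\<lambda>(x1, x2, y). (x1, y)) = (\<lambda>z::('a \<times> 'b \<times> 'c). (fst z, snd (snd z)))"
      by auto
    show ?thesis unfolding e mi_expand[OF fin] q1y_def q1_def qy_def ..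
  qed
  have MI2Y: "mutual_info (map_pmf (\<lambda>(x1, x2, y). (x2, y)) P) =
      (\<Sum>z\<in>set_pmf P. pmf P z * (log 2 (q2y z) - log 2 (q2 z) - log 2 (qy z)))"
  proof -
    have e: "(\<lambda>(x1, x2, y). (x2, y)) = (\<lambda>z::('a \<times> 'b \<times> 'c). (fst (snd z), snd (snd z)))"
      by auto
    show ?thesis unfolding e mi_expand[OF fin] q2y_def q2_def qy_def ..
  qed
  have MI12: "mutual_info (map_pmf (\<lambda>(x1, x2, y). (x1, x2)) P) =
      (\<Sum>z\<in>set_pmf P. pmf P z * (log 2 (q12 z) - log 2 (q1 z) - log 2 (q2 z)))"
  proof -
    have e: "(\<lambda>(x1, x2, y). (x1, x2)) = (\<lambda>z::('a \<times> 'b \<times> 'c). (fst z, fst (snd z)))"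
      by auto
    show ?thesis unfolding e mi_expand[OF fin] q12_def q1_def q2_def ..
  qed
  have A: "mutual_info (map_pmf (\<lambda>(x1, x2, y). ((x1, x2), y)) P) = mutual_info (map_pmf (\<lambda>(x1, x2, y). (x2, y)) P)"
    if mc: "markov_chain (map_pmf (\<lambda>(x1, x2, y). (x1, x2, y)) P)"
  proof -
    have eq: "pmf P z * q2 z = q12 z * q2y z" for z
    proof -
      obtain a b c where z: "z = (a, b, c)" by (cases z) auto
      have "pmf (map_pmf (\<lambda>(x1, x2, y). (x1, x2, y)) P) (a,b,c) * pmf (map_pmf (\<lambda>(a, b, c). b) (map_pmf (\<lambda>(x1, x2, y). (x1, x2, y)) P)) b =
              pmf (map_pmf (\<lambda>(a, b, c). (a, b)) (map_pmf (\<lambda>(x1, x2, y). (x1, x2, y)) P)) (a, b) *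
              pmf (map_pmf (\<lambda>(a, b, c). (b, c)) (map_pmf (\<lambda>(x1, x2, y). (x1, x2, y)) P)) (b, c)"
        using mc unfolding markov_chain_def by blast
      moreover have "map_pmf (\<lambda>(x1, x2, y). (x1, x2, y)) P = P"
        by (simp add: case_prod_unfold)
      moreover have "map_pmf (\<lambda>(a, b, c). b) P = map_pmf (\<lambda>z. fst (snd z)) P"
        by (simp add: case_prod_unfold)
      moreover have "map_pmf (\<lambda>(a, b, c). (a, b)) P = map_pmf ?X P"
        by (simp add: case_prod_unfold)
      moreover have "map_pmf (\<lambda>(a, b, c). (b, c)) P = map_pmf ?B P"
        by (simp add: case_prod_unfold)
      ultimately show ?thesis unfolding z q2_def q12_def q2y_def by simp
    qed
    show ?thesis unfolding MI12Y MI2Y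
    proof (rule sum.cong[OF refl])
      fix z assume z: "z \<in> set_pmf P"
      have "log 2 (pmf P z * q2 z) = log 2 (q12 z * q2y z)" using eq by simp
      then have "log 2 (pmf P z) + log 2 (q2 z) = log 2 (q12 z) + log 2 (q2y z)"
        using pos[OF z] by (simp add: log_mult)
      note L = arg_cong[where f="\<lambda>t. pmf P z * t", OF this]
      then show "pmf P z * (log 2 (pmf P z) - log 2 (q12 z) - log 2 (qy z)) =
          pmf P z * (log 2 (q2y z) - log 2 (q2 z) - log 2 (qy z))" using L by (simp add: algebra_simps)
    qed
  qed
  have B: "mutual_info (map_pmf (\<lambda>(x1, x2, y). ((x1, x2), y)) P) = mutual_info (map_pmf (\<lambda>(x1, x2, y). (x1, y)) P)"
    if mc: "markov_chain (map_pmf (\<lambda>(x1, x2, y). (x2, x1, y)) P)"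
  proof -
    have eq: "pmf P z * q1 z = q12 z * q1y z" for z
    proof -
      obtain a b c where z: "z = (a, b, c)" by (cases z) auto
      have "pmf (map_pmf (\<lambda>(x1, x2, y). (x2, x1, y)) P) (b,a,c) * pmf (map_pmf (\<lambda>(a, b, c). b) (map_pmf (\<lambda>(x1, x2, y). (x2, x1, y)) P)) a =
              pmf (map_pmf (\<lambda>(a, b, c). (a, b)) (map_pmf (\<lambda>(x1, x2, y). (x2, x1, y)) P)) (b, a) *
              pmf (map_pmf (\<lambda>(a, b, c). (b, c)) (map_pmf (\<lambda>(x1, x2, y). (x2, x1, y)) P)) (a, c)"
        using mc unfolding markov_chain_def by blast
      moreover have "map_pmf (\<lambda>(a, b, c). b) (map_pmf (\<lambda>(x1, x2, y). (x2, x1, y)) P) = map_pmf fst P"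
        by (simp add: map_pmf_comp case_prod_unfold)
      moreover have "map_pmf (\<lambda>(a, b, c). (a,b)) (map_pmf (\<lambda>(x1, x2, y). (x2, x1, y)) P) = map_pmf prod.swap (map_pmf ?X P)"
        by (simp add: map_pmf_comp case_prod_unfold)
      moreover have "map_pmf (\<lambda>(a, b, c). (b,c)) (map_pmf (\<lambda>(x1, x2, y). (x2, x1, y)) P) = map_pmf ?A P"
        by (simp add: map_pmf_comp case_prod_unfold)
      moreover have "pmf (map_pmf (\<lambda>(x1, x2, y). (x2, x1, y)) P) (b,a,c) = pmf P (a,b,c)"
        using pmf_map_inj'[of "\<lambda>(x1, x2, y). (x2, x1, y)" P "(a,b,c)"] by (auto simp: inj_def)
      moreover have "pmf (map_pmf prod.swap (map_pmf ?X P)) (b, a) = pmf (map_pmf ?X P) (a, b)"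
        using pmf_map_inj'[of prod.swap "map_pmf ?X P" "(a,b)"] by simp
      ultimately show ?thesis unfolding z q1_def q12_def q1y_def by simp
    qed
    show ?thesis unfolding MI12Y MI1Y
    proof (rule sum.cong[OF refl])
      fix z assume z: "z \<in> set_pmf P"
      have "log 2 (pmf P z * q1 z) = log 2 (q12 z * q1y z)" using eq by simp
      then have "log 2 (pmf P z) + log 2 (q1 z) = log 2 (q12 z) + log 2 (q1y z)"
        using pos[OF z] by (simp add: log_mult)
      note L = arg_cong[where f="\<lambda>t. pmf P z * t", OF this]
      then show "pmf P z * (log 2 (pmf P z) - log 2 (q12 z) - log 2 (qy z)) =
          pmf P z * (log 2 (q1y z) - log 2 (q1 z) - log 2 (qy z))" using L by (simp add: algebra_simps)
    qed
  qed
  have D: "mutual_info (map_pmf (\<lambda>(x1, x2, y). (x1, y)) P) + mutual_info (map_pmf (\<lambda>(x1, x2, y). (x2, y)) P)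
      = mutual_info (map_pmf (\<lambda>(x1, x2, y). ((x1, x2), y)) P) + mutual_info (map_pmf (\<lambda>(x1, x2, y). (x1, x2)) P)"
    if mc: "markov_chain (map_pmf (\<lambda>(x1, x2, y). (x1, y, x2)) P)"
  proof -
    have eq: "pmf P z * qy z = q1y z * q2y z" for z
    proof -
      obtain a b c where z: "z = (a, b, c)" by (cases z) auto
      have "pmf (map_pmf (\<lambda>(x1, x2, y). (x1, y, x2)) P) (a,c,b) * pmf (map_pmf (\<lambda>(a, b, c). b) (map_pmf (\<lambda>(x1, x2, y). (x1, y, x2)) P)) c =
              pmf (map_pmf (\<lambda>(a, b, c). (a, b)) (map_pmf (\<lambda>(x1, x2, y). (x1, y, x2)) P)) (a, c) *
              pmf (map_pmf (\<lambda>(a, b, c). (b, c)) (map_pmf (\<lambda>(x1, x2, y). (x1, y, x2)) P)) (c, b)"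
        using mc unfolding markov_chain_def by blast
      moreover have "map_pmf (\<lambda>(a, b, c). b) (map_pmf (\<lambda>(x1, x2, y). (x1, y, x2)) P) = map_pmf (\<lambda>z. snd (snd z)) P"
        by (simp add: map_pmf_comp case_prod_unfold)
      moreover have "map_pmf (\<lambda>(a, b, c). (a,b)) (map_pmf (\<lambda>(x1, x2, y). (x1, y, x2)) P) = map_pmf ?A P"
        by (simp add: map_pmf_comp case_prod_unfold)
      moreover have "map_pmf (\<lambda>(a, b, c). (b,c)) (map_pmf (\<lambda>(x1, x2, y). (x1, y, x2)) P) = map_pmf prod.swap (map_pmf ?B P)"
        by (simp add: map_pmf_comp case_prod_unfold prod.swap_def)
      moreover have "pmf (map_pmf (\<lambda>(x1, x2, y). (x1, y, x2)) P) (a,c,b) = pmf P (a,b,c)"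
        using pmf_map_inj'[of "\<lambda>(x1, x2, y). (x1, y, x2)" P "(a,b,c)"] by (auto simp: inj_def)
      moreover have "pmf (map_pmf prod.swap (map_pmf ?B P)) (c, b) = pmf (map_pmf ?B P) (b, c)"
        using pmf_map_inj'[of prod.swap "map_pmf ?B P" "(b,c)"] by simp
      ultimately show ?thesis unfolding z qy_def q1y_def q2y_def by simp
    qed
    show ?thesis unfolding MI12Y MI1Y MI2Y MI12 sum.distrib[symmetric]
    proof (rule sum.cong[OF refl])
      fix z assume z: "z \<in> set_pmf P"
      have "log 2 (pmf P z * qy z) = log 2 (q1y z * q2y z)" using eq by simp
      then have "log 2 (pmf P z) + log 2 (qy z) = log 2 (q1y z) + log 2 (q2y z)"
        using pos[OF z] by (simp add: log_mult)
      note L = arg_cong[where f="\<lambda>t. pmf P z * t", OF this]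
      then show "pmf P z * (log 2 (q1y z) - log 2 (q1 z) - log 2 (qy z)) + pmf P z * (log 2 (q2y z) - log 2 (q2 z) - log 2 (qy z)) =
          pmf P z * (log 2 (pmf P z) - log 2 (q12 z) - log 2 (qy z)) + pmf P z * (log 2 (q12 z) - log 2 (q1 z) - log 2 (q2 z))"
        using L by (simp add: algebra_simps)
    qed
  qed
  show ?thesis
    using A B D joint m1 m2 nonneg by auto
qed

end
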